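(* Let $z_0\in\Delta\setminus\{0\}$ and let $c\in\mathbb R$ with $0\le c<\frac{1}{16(1+\varepsilon)^3}$. Then every infinitesimal extremal disc for the pair $\big((0,0),(1,cz_0)\big)$ in $\Omega$ is a complex geodesic and an infinitesimal complex geodesic of $\Omega$.
   Context: $\Delta$ denotes the unit disc in $\mathbb C$ and $\Delta_r$ the disc of radius $r$ centered at $0$. Fix $0<\varepsilon<\frac{1}{100}$. Let $\rho(z,w)=|z|^2+|w|^2-\operatorname{Re}(\bar z^4w^2)-1$ on $\mathbb C^2$, and $\Omega=\{\rho<0\}\cap\big(\Delta_{1+\varepsilon}\times\Delta_{\frac{1}{4(1+\varepsilon)^3}}\big)$. A holomorphic $f:\Delta\to\Omega$ is an infinitesimal extremal disc for $(p,v)$ if $f(0)=p$, $f'(0)=\lambda v$ with $\lambda>0$, and for every holomorphic $g:\Delta\to\Omega$ with $g(0)=p$, $g'(0)=\mu v$, $\mu>0$, one has $\mu\le\lambda$. It is a complex geodesic if $d_\Omega(f(\zeta),f(\zeta'))=d_\Delta(\zeta,\zeta')$ for all $\zeta,\zeta'\in\Delta$, and an infinitesimal complex geodesic if $K_\Omega(f(\zeta),d_\zeta f(v_0))=K_\Delta(\zeta,v_0)$ for all $\zeta\in\Delta$, $v_0\in\mathbb C$ ($K,d$ the Kobayashi metric and distance; on $\Delta$ the Poincaré ones). *)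

theory Defs
  imports "HOL-Analysis.Analysis"
begin

definition rho :: "complex \<times> complex \<Rightarrow> real" where
  "rho p = (cmod (fst p))^2 + (cmod (snd p))^2 - Re ((cnj (fst p))^4 * (snd p)^2) - 1"

definition Omega :: "real \<Rightarrow> (complex \<times> complex) set" where
  "Omega \<epsilon> = {p. rho p < 0} \<inter>
     (ball 0 (1 + \<epsilon>) \<times> ball 0 (1 / (4 * (1 + \<epsilon>)^3)))"

definition hol_map :: "(complex \<times> complex) set \<Rightarrow> (complex \<Rightarrow> complex \<times> complex) \<Rightarrow> bool" where
  "hol_map D f \<longleftrightarrow> (\<lambda>z. fst (f z)) holomorphic_on ball 0 1 \<and>
                     (\<lambda>z. snd (f z)) holomorphic_on ball 0 1 \<and>
                     (\<forall>z\<in>ball 0 1. f z \<in> D)"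

definition cderiv :: "(complex \<Rightarrow> complex \<times> complex) \<Rightarrow> complex \<Rightarrow> complex \<times> complex" where
  "cderiv f z = (deriv (\<lambda>w. fst (f w)) z, deriv (\<lambda>w. snd (f w)) z)"

definition inf_extremal ::
  "(complex \<times> complex) set \<Rightarrow> complex \<times> complex \<Rightarrow> complex \<times> complex \<Rightarrow> (complex \<Rightarrow> complex \<times> complex) \<Rightarrow> bool" where
  "inf_extremal D p v f \<longleftrightarrow> hol_map D f \<and> f 0 = p \<and>
     (\<exists>lam>0. cderiv f 0 = lam *\<^sub>R v \<and>
        (\<forall>g \<mu>. hol_map D g \<and> g 0 = p \<and> \<mu> > 0 \<and> cderiv g 0 = \<mu> *\<^sub>R v \<longrightarrow> \<mu> \<le> lam))"

definition poincare_dist :: "complex \<Rightarrow> complex \<Rightarrow> real" where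
  "poincare_dist a b = artanh (cmod ((a - b) / (1 - cnj a * b)))"

definition poincare_metric :: "complex \<Rightarrow> complex \<Rightarrow> real" where
  "poincare_metric z v = cmod v / (1 - (cmod z)^2)"

definition kob_metric :: "(complex \<times> complex) set \<Rightarrow> complex \<times> complex \<Rightarrow> complex \<times> complex \<Rightarrow> real" where
  "kob_metric D p v = Inf {1 / r | r. r > 0 \<and> (\<exists>g. hol_map D g \<and> g 0 = p \<and> cderiv g 0 = r *\<^sub>R v)}"

definition kob_dist :: "(complex \<times> complex) set \<Rightarrow> complex \<times> complex \<Rightarrow> complex \<times> complex \<Rightarrow> real" where
  "kob_dist D p q = Inf {s. \<exists>(m::nat) (x::nat \<Rightarrow> complex \<times> complex) f a b.
      x 0 = p \<and> x m = q \<and>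
      (\<forall>j<m. hol_map D (f j) \<and> a j \<in> ball 0 1 \<and> b j \<in> ball 0 1 \<and>
              f j (a j) = x j \<and> f j (b j) = x (Suc j)) \<and>
      s = (\<Sum>j<m. poincare_dist (a j) (b j))}"

definition complex_geodesic :: "(complex \<times> complex) set \<Rightarrow> (complex \<Rightarrow> complex \<times> complex) \<Rightarrow> bool" where
  "complex_geodesic D f \<longleftrightarrow> hol_map D f \<and>
     (\<forall>\<zeta>\<in>ball 0 1. \<forall>\<zeta>'\<in>ball 0 1. kob_dist D (f \<zeta>) (f \<zeta>') = poincare_dist \<zeta> \<zeta>')"

definition inf_complex_geodesic :: "(complex \<times> complex) set \<Rightarrow> (complex \<Rightarrow> complex \<times> complex) \<Rightarrow> bool" where
  "inf_complex_geodesic D f \<longleftrightarrow> hol_map D f \<and>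
     (\<forall>\<zeta>\<in>ball 0 1. \<forall>v0. kob_metric D (f \<zeta>) (v0 * fst (cderiv f \<zeta>), v0 * snd (cderiv f \<zeta>))
                           = poincare_metric \<zeta> v0)"

end

theory Submission
  imports Defs "HOL-Complex_Analysis.Complex_Analysis"
begin

lemma real_ineq:
  fixes t x y :: real
  assumes "0 \<le> t" "t < 1" "x^2 + y^2 < 1/256"
  shows "t + ((1+t)*x)^2 + ((1-t)*y)^2 - t^2*(((1+t)*x)^2 - ((1-t)*y)^2) - 1 < 0"
proof -
  have eq: "t + ((1+t)*x)^2 + ((1-t)*y)^2 - t^2*(((1+t)*x)^2 - ((1-t)*y)^2) - 1
      = (1-t)*(-1 + (1+t)^3*x^2 + (1-t)*(1+t^2)*y^2)"
    by (simp add: algebra_simps power2_eq_square power3_eq_cube)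
  have "(1+t)^3 \<le> 8"
  proof -
    have "(1+t)^3 \<le> 2^3" by (rule power_mono) (use assms in auto)
    thus ?thesis by simp
  qed
  hence a: "(1+t)^3*x^2 \<le> 8*x^2" by (simp add: mult_right_mono)
  have "(1-t)*(1+t^2) \<le> 2"
  proof -
    have "t^2 \<le> 1" using assms by (simp add: power_le_one)
    hence "(1-t)*(1+t^2) \<le> 1*2" by (intro mult_mono) (use assms in auto)
    thus ?thesis by simp
  qed
  hence b: "(1-t)*(1+t^2)*y^2 \<le> 2*y^2" by (simp add: mult_right_mono)
  have "x^2 \<ge> 0" "y^2 \<ge> 0" by auto
  hence "-1 + (1+t)^3*x^2 + (1-t)*(1+t^2)*y^2 < 0" using a b assms(3) by linarith
  thus ?thesis unfolding eq using assms by (simp add: mult_pos_neg)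
qed

lemma disc_rho:
  fixes a z :: complex
  assumes a: "cmod a < 1/16" and z: "cmod z < 1"
  shows "rho (z, a*z + cnj a * z^3) < 0"
proof -
  define t where "t = (cmod z)^2"
  define p where "p = a * cnj z"
  define Q where "Q = a + cnj a * z^2"
  define X where "X = cnj z * Q"
  have ht: "z * cnj z = of_real t" unfolding t_def by (rule complex_norm_square[symmetric])
  have X: "X = p + of_real t * cnj p" unfolding X_def Q_def p_def using ht
    by (simp add: algebra_simps power2_eq_square)
  have s: "a*z + cnj a * z^3 = z * Q" unfolding Q_def by (simp add: algebra_simps power2_eq_square power3_eq_cube)
  have n1: "(cmod (a*z + cnj a * z^3))^2 = (cmod X)^2"
    unfolding s X_def by (simp add: norm_mult)
  have n2: "cnj z ^4 * (a*z + cnj a * z^3)^2 = of_real (t^2) * X^2"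
  proof -
    have "cnj z ^4 * (z * Q)^2 = (z * cnj z)^2 * (cnj z * Q)^2"
      by (simp add: power_mult_distrib power2_eq_square power4_eq_xxxx mult_ac)
    thus ?thesis unfolding s X_def ht by simp
  qed
  have ReX: "Re X = (1+t) * Re p" and ImX: "Im X = (1-t) * Im p" unfolding X by (auto simp: algebra_simps)
  have "rho (z, a*z + cnj a * z^3) = t + (cmod X)^2 - Re (of_real (t^2) * X^2) - 1"
    unfolding rho_def fst_conv snd_conv n1 n2 t_def[symmetric] by simp
  also have "\<dots> = t + (Re X)^2 + (Im X)^2 - t^2 * ((Re X)^2 - (Im X)^2) - 1"
    unfolding cmod_power2 by (simp add: power2_eq_square)
  finally have rr: "rho (z, a*z + cnj a * z^3) = t + (Re X)^2 + (Im X)^2 - t^2 * ((Re X)^2 - (Im X)^2) - 1" .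
  have "(cmod p)^2 = (cmod a)^2 * t" unfolding p_def t_def by (simp add: norm_mult power_mult_distrib)
  also have "\<dots> < 1/256"
  proof -
    have "t \<le> 1" unfolding t_def using z by (simp add: power_le_one)
    moreover have "(cmod a)^2 < (1/16)^2" using a by (intro power_strict_mono) auto
    ultimately have "(cmod a)^2 * t \<le> (cmod a)^2" by (simp add: mult_left_le)
    thus ?thesis using \<open>(cmod a)^2 < (1/16)^2\<close> by (simp add: power2_eq_square)
  qed
  finally have p: "(Re p)^2 + (Im p)^2 < 1/256" by (simp add: cmod_power2)
  have t: "0 \<le> t" "t < 1" unfolding t_def using z by (auto simp: power_less_one_iff power2_less_eq_zero_iff abs_square_less_1)
  show ?thesis unfolding rr ReX ImX using real_ineq[OF t p] by simp
qed

lemma Omega_fst: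
  assumes e: "0 < \<epsilon>" "\<epsilon> < 1/100" and p: "p \<in> Omega \<epsilon>"
  shows "cmod (fst p) < 1"
proof -
  obtain z w where pz: "p = (z, w)" by (cases p)
  define A where "A = (cmod z)^2"
  define B where "B = (cmod w)^2"
  have r: "A + B - Re ((cnj z)^4 * w^2) - 1 < 0" and zb: "cmod z < 1 + \<epsilon>"
    and wb: "cmod w < 1 / (4 * (1 + \<epsilon>)^3)"
    using p unfolding Omega_def rho_def pz A_def B_def by auto
  have "Re ((cnj z)^4 * w^2) \<le> cmod ((cnj z)^4 * w^2)" by (rule complex_Re_le_cmod)
  also have "\<dots> = A^2 * B" unfolding A_def B_def by (simp add: norm_mult norm_power power_mult_distrib flip: power_mult)
  finally have r2: "(A - 1) * (1 - (A + 1) * B) < 0" using r by (simp add: algebra_simps power2_eq_square)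
  have "A < (1+\<epsilon>)^2" unfolding A_def using zb by (intro power_strict_mono) auto
  also have "\<dots> \<le> 2" proof -
    have "\<epsilon> * \<epsilon> < 1 * \<epsilon>" using e by (intro mult_strict_right_mono) auto
    moreover have "(1+\<epsilon>)^2 = 1 + 2*\<epsilon> + \<epsilon>*\<epsilon>" by (simp add: power2_eq_square algebra_simps)
    ultimately show ?thesis using e by linarith
  qed
  finally have A2: "A < 2" .
  have "1 \<le> (1+\<epsilon>)^3" using e by (simp add: one_le_power)
  hence "1 / (4 * (1 + \<epsilon>)^3) \<le> 1/(4*1)" by (intro divide_left_mono) (use e in auto)
  hence "1 / (4 * (1 + \<epsilon>)^3) \<le> 1/4" by simp
  hence "cmod w < 1/4" using wb by linarith
  hence "B < (1/4)^2" unfolding B_def by (intro power_strict_mono) auto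
  moreover have "B \<ge> 0" unfolding B_def by simp
  moreover have "(A + 1) * B \<le> 3 * B" using A2 \<open>B \<ge> 0\<close> by (intro mult_right_mono) auto
  ultimately have "(A + 1) * B < 1" by (simp add: power2_eq_square)
  have "A - 1 < 0"
  proof (rule ccontr)
    assume "\<not> A - 1 < 0"
    hence "0 \<le> (A - 1) * (1 - (A + 1) * B)" using \<open>(A + 1) * B < 1\<close> by (intro mult_nonneg_nonneg) auto
    thus False using r2 by simp
  qed
  hence "A < 1" by simp
  thus ?thesis unfolding A_def pz by (simp add: power_less_one_iff abs_square_less_1)
qed

definition pd :: "complex \<Rightarrow> complex \<Rightarrow> real" where
  "pd a b = cmod ((a - b) / (1 - cnj a * b))"

lemma poincare_dist_pd: "poincare_dist a b = artanh (pd a b)"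
  by (simp add: poincare_dist_def pd_def)

lemma pd_mob: "pd a b = cmod (Moebius_function 0 a b)"
  by (simp add: pd_def Moebius_function_simple norm_divide norm_minus_commute)

lemma pd_sym: "pd a b = pd b a"
proof -
  have "cmod (1 - cnj a * b) = cmod (cnj (1 - cnj a * b))" by (rule complex_mod_cnj[symmetric])
  also have "\<dots> = cmod (1 - cnj b * a)" by (simp add: mult.commute)
  finally show ?thesis by (simp add: pd_def norm_divide norm_minus_commute)
qed

lemma pd_self: "pd a a = 0" by (simp add: pd_def)

lemma pd_lt1: assumes "cmod a < 1" "cmod b < 1" shows "pd a b < 1" "0 \<le> pd a b"
  using Moebius_function_norm_lt_1[OF assms, of 0] by (auto simp: pd_mob)

lemma mob_maps: "cmod w < 1 \<Longrightarrow> z \<in> ball 0 1 \<Longrightarrow> Moebius_function 0 w z \<in> ball 0 1"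
  using Moebius_function_norm_lt_1 by auto

lemma schwarz_pick:
  assumes hol: "g holomorphic_on ball 0 1" and into: "\<And>z. z \<in> ball 0 1 \<Longrightarrow> g z \<in> ball 0 1"
    and a: "a \<in> ball 0 1" and b: "b \<in> ball 0 1"
  shows "pd (g a) (g b) \<le> pd a b"
proof -
  define h where "h = Moebius_function 0 (g a) \<circ> (g \<circ> Moebius_function 0 (-a))"
  have na: "cmod a < 1" "cmod (-a) < 1" using a by auto
  have nga: "cmod (g a) < 1" using into[OF a] by auto
  have "(g \<circ> Moebius_function 0 (-a)) holomorphic_on ball 0 1"
    by (rule holomorphic_on_compose_gen[OF Moebius_function_holomorphic[OF na(2)] hol])
       (use mob_maps na in auto)
  hence holh: "h holomorphic_on ball 0 1" unfolding h_def
    by (rule holomorphic_on_compose_gen[OF _ Moebius_function_holomorphic[OF nga]])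
       (use mob_maps na into in auto)
  have m0: "Moebius_function 0 (-a) 0 = a" by (simp add: Moebius_function_of_zero)
  have h0: "h 0 = 0" unfolding h_def by (simp add: m0 Moebius_function_eq_zero)
  have hn: "cmod (h z) < 1" if "cmod z < 1" for z
    unfolding h_def using that na nga into mob_maps
    by (simp add: Moebius_function_norm_lt_1)
  define xi where "xi = Moebius_function 0 a b"
  have xi: "cmod xi < 1" unfolding xi_def using b na Moebius_function_norm_lt_1 by auto
  have "Moebius_function 0 (-a) xi = b" unfolding xi_def
    by (rule Moebius_function_compose) (use na b in auto)
  hence "h xi = Moebius_function 0 (g a) (g b)" unfolding h_def by simp
  moreover have "cmod (h xi) \<le> cmod xi" by (rule Schwarz_Lemma(1)[OF holh h0 hn xi])
  ultimately show ?thesis by (simp add: pd_mob xi_def)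
qed

lemma schwarz_pick_deriv:
  assumes hol: "g holomorphic_on ball 0 1" and into: "\<And>z. z \<in> ball 0 1 \<Longrightarrow> g z \<in> ball 0 1"
    and g0: "g 0 = w"
  shows "cmod (deriv g 0) \<le> 1 - (cmod w)^2"
proof -
  have nw: "cmod w < 1" using into[of 0] g0 by auto
  define h where "h = Moebius_function 0 w \<circ> g"
  have holh: "h holomorphic_on ball 0 1" unfolding h_def
    by (rule holomorphic_on_compose_gen[OF hol Moebius_function_holomorphic[OF nw]]) (use into in auto)
  have h0: "h 0 = 0" unfolding h_def using g0 by (simp add: Moebius_function_eq_zero)
  have hn: "cmod (h z) < 1" if "cmod z < 1" for z
    unfolding h_def using that nw into by (simp add: Moebius_function_norm_lt_1)
  define D where "D = 1 - cnj w * w"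
  have "cnj w * w = of_real ((cmod w)^2)" by (simp only: complex_norm_square mult.commute)
  hence Dr: "D = of_real (1 - (cmod w)^2)" unfolding D_def by simp
  have Dpos: "1 - (cmod w)^2 > 0" using nw by (simp add: power_less_one_iff abs_square_less_1)
  have "of_real (1 - (cmod w)^2) \<noteq> (0::complex)" by (simp only: of_real_eq_0_iff) (use Dpos in linarith)
  hence Dnz: "D \<noteq> 0" unfolding Dr .
  have dg: "(g has_field_derivative deriv g 0) (at 0)"
    by (rule holomorphic_derivI[OF hol]) auto
  have dm: "(Moebius_function 0 w has_field_derivative 1 / D) (at w)"
  proof -
    have "((\<lambda>z. (z - w) / (1 - cnj w * z)) has_field_derivative 1 / D) (at w)"
      using Dnz by (auto intro!: derivative_eq_intros simp: D_def[symmetric] power2_eq_square)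
    thus ?thesis by (simp add: Moebius_function_def)
  qed
  have "(h has_field_derivative (1 / D) * deriv g 0) (at 0)" unfolding h_def
    using DERIV_chain[OF dm[folded g0] dg] g0 by simp
  hence "deriv h 0 = deriv g 0 / D" by (simp add: DERIV_imp_deriv)
  moreover have "cmod (deriv h 0) \<le> 1" using Schwarz_Lemma(2)[OF holh h0 hn, where \<xi>="0::complex"] by simp
  ultimately have "cmod (deriv g 0) / cmod D \<le> 1" by (simp add: norm_divide)
  moreover have "cmod D = 1 - (cmod w)^2" unfolding Dr by (simp only: norm_of_real) (use Dpos in simp)
  ultimately show ?thesis using Dpos by (simp add: divide_le_eq)
qed

lemma pd_bound:
  assumes u: "cmod u < 1" and w: "cmod w < 1"
  shows "pd u w \<le> (cmod u + cmod w) / (1 + cmod u * cmod w)"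
proof -
  define A where "A = cmod u"
  define B where "B = cmod w"
  define N where "N = cmod (u - w)"
  define D where "D = cmod (1 - cnj u * w)"
  have A: "0 \<le> A" "A < 1" and B: "0 \<le> B" "B < 1" using u w by (auto simp: A_def B_def)
  have "cmod u * cmod w \<le> cmod u" using w by (simp add: mult_left_le)
  hence "cmod (cnj u * w) < 1" using u by (simp add: norm_mult)
  hence Dpos: "D > 0" unfolding D_def by (metis norm_one right_minus_eq zero_less_norm_iff order.irrefl)
  have Dle: "D \<le> 1 + A * B" unfolding D_def A_def B_def
    using norm_triangle_ineq4[of 1 "cnj u * w"] by (simp add: norm_mult)
  have iden: "D^2 - N^2 = (1 - A^2) * (1 - B^2)" unfolding D_def N_def A_def B_def cmod_power2
    by (simp add: power2_eq_square algebra_simps)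
  define P where "P = (1 - A^2) * (1 - B^2)"
  have P0: "P \<ge> 0" unfolding P_def using A B by (simp add: power_le_one)
  have e2: "(1 + A*B)^2 - (A+B)^2 = P" unfolding P_def by (simp add: power2_eq_square algebra_simps)
  have "D^2 \<le> (1 + A*B)^2" using Dle Dpos by (intro power_mono) auto
  hence "D^2 * P \<le> (1 + A*B)^2 * P" using P0 by (rule mult_right_mono)
  hence key: "N^2 * (1 + A*B)^2 \<le> (A+B)^2 * D^2"
    using iden e2 unfolding P_def[symmetric] by (simp add: algebra_simps)
  have ABpos: "1 + A*B > 0" using A B by (simp add: add_pos_nonneg)
  have "(N / D)^2 \<le> ((A+B)/(1+A*B))^2"
  proof -
    have "D^2 > 0" "(1+A*B)^2 > 0" using Dpos ABpos by auto
    hence "N^2 / D^2 \<le> (A+B)^2 / (1+A*B)^2" using key by (simp add: divide_simps mult.commute)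
    thus ?thesis by (simp add: power_divide)
  qed
  hence "N / D \<le> (A+B)/(1+A*B)"
    by (rule power2_le_imp_le) (use A B ABpos in auto)
  thus ?thesis unfolding pd_def by (simp add: norm_divide N_def D_def A_def B_def)
qed


lemma artanh_mono:
  fixes x y :: real
  assumes "0 \<le> x" "x \<le> y" "y < 1"
  shows "artanh x \<le> artanh y"
proof -
  have "(1+x)/(1-x) \<le> (1+y)/(1-y)" using assms
    by (simp add: divide_simps algebra_simps)
  moreover have "0 < (1+x)/(1-x)" using assms by simp
  ultimately have "ln ((1+x)/(1-x)) \<le> ln ((1+y)/(1-y))" by simp
  thus ?thesis unfolding artanh_def by simp
qed

lemma artanh_add:
  fixes x y :: real
  assumes x: "0 \<le> x" "x < 1" and y: "0 \<le> y" "y < 1"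
  shows "artanh ((x+y)/(1+x*y)) = artanh x + artanh y"
proof -
  have p: "1 + x*y > 0" using x y by (simp add: add_pos_nonneg)
  have q: "(1-x)*(1-y) > 0" using x y by simp
  have e1: "1 + (x+y)/(1+x*y) = (1+x)*(1+y)/(1+x*y)" using p by (simp add: field_simps)
  have e2: "1 - (x+y)/(1+x*y) = (1-x)*(1-y)/(1+x*y)" using p by (simp add: field_simps)
  have nz: "1 - x \<noteq> 0" "1 - y \<noteq> 0" "1 + x*y \<noteq> 0" using x y p by auto
  have "(1 + (x+y)/(1+x*y)) / (1 - (x+y)/(1+x*y)) = ((1+x)/(1-x)) * ((1+y)/(1-y))"
  proof -
    have g: "(P/c)/(Q/c) = P/Q" if "c \<noteq> 0" for P Q c :: real using that by simp
    show ?thesis unfolding e1 e2 g[OF nz(3)] by (simp add: times_divide_times_eq)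
  qed
  moreover have "0 < (1+x)/(1-x)" "0 < (1+y)/(1-y)" using x y by auto
  ultimately show ?thesis unfolding artanh_def by (simp add: ln_mult add_divide_distrib)
qed

lemma pd_bound_lt: fixes x y :: real assumes "0 \<le> x" "x < 1" "0 \<le> y" "y < 1" shows "(x+y)/(1+x*y) < 1"
proof -
  have "0 < (1-x)*(1-y)" using assms by simp
  hence "x + y < 1 + x*y" by (simp add: algebra_simps)
  thus ?thesis using assms by (simp add: divide_simps add_pos_nonneg)
qed

lemma poincare_triangle:
  assumes a: "a \<in> ball 0 1" and b: "b \<in> ball 0 1" and c: "c \<in> ball 0 1"
  shows "poincare_dist a c \<le> poincare_dist a b + poincare_dist b c"
proof -
  have nb: "cmod b < 1" "cmod (-b) < 1" using b by auto
  define u where "u = Moebius_function 0 b a"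
  define w where "w = Moebius_function 0 b c"
  have u: "cmod u = pd a b" unfolding u_def using pd_mob[of b a] pd_sym[of a b] by simp
  have w: "cmod w = pd b c" unfolding w_def by (simp add: pd_mob)
  have ub: "u \<in> ball 0 1" "w \<in> ball 0 1" unfolding u_def w_def using mob_maps nb a c by auto
  have au: "Moebius_function 0 (-b) u = a" unfolding u_def
    by (rule Moebius_function_compose) (use nb a in auto)
  have cw: "Moebius_function 0 (-b) w = c" unfolding w_def
    by (rule Moebius_function_compose) (use nb c in auto)
  have "pd (Moebius_function 0 (-b) u) (Moebius_function 0 (-b) w) \<le> pd u w"
    by (rule schwarz_pick[OF Moebius_function_holomorphic[OF nb(2)] _ ub]) (use mob_maps nb in auto)
  hence "pd a c \<le> pd u w" using au cw by simp
  also have "\<dots> \<le> (pd a b + pd b c) / (1 + pd a b * pd b c)"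
    using pd_bound[of u w] ub u w by auto
  finally have le: "pd a c \<le> (pd a b + pd b c) / (1 + pd a b * pd b c)" .
  have r: "0 \<le> pd a b" "pd a b < 1" "0 \<le> pd b c" "pd b c < 1" "0 \<le> pd a c"
    using pd_lt1 a b c by auto
  have "artanh (pd a c) \<le> artanh ((pd a b + pd b c) / (1 + pd a b * pd b c))"
    by (rule artanh_mono[OF r(5) le pd_bound_lt]) (use r in auto)
  also have "\<dots> = artanh (pd a b) + artanh (pd b c)" by (rule artanh_add) (use r in auto)
  finally show ?thesis by (simp add: poincare_dist_pd)
qed

lemma poincare_dist_nonneg: "a \<in> ball 0 1 \<Longrightarrow> b \<in> ball 0 1 \<Longrightarrow> 0 \<le> poincare_dist a b"
  using artanh_mono[of 0 "pd a b"] pd_lt1[of a b] by (auto simp: poincare_dist_pd)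

lemma chain_bound:
  assumes proj: "\<And>p. p \<in> D \<Longrightarrow> fst p \<in> ball 0 1"
    and ch: "\<forall>j<m. hol_map D (f j) \<and> a j \<in> ball 0 1 \<and> b j \<in> ball 0 1 \<and>
              f j (a j) = x j \<and> f j (b j) = x (Suc j)"
  shows "poincare_dist (fst (x 0)) (fst (x m)) \<le> (\<Sum>j<m. poincare_dist (a j) (b j))"
  using ch
proof (induction m)
  case 0
  then show ?case by (simp add: poincare_dist_pd pd_self)
next
  case (Suc m)
  have ch': "\<forall>j<m. hol_map D (f j) \<and> a j \<in> ball 0 1 \<and> b j \<in> ball 0 1 \<and>
              f j (a j) = x j \<and> f j (b j) = x (Suc j)" using Suc.prems by auto
  have hm: "hol_map D (f m)" "a m \<in> ball 0 1" "b m \<in> ball 0 1" "f m (a m) = x m"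
    "f m (b m) = x (Suc m)" using Suc.prems by auto
  have inD: "x j \<in> D" if "j \<le> Suc m" for j
  proof (cases "j = Suc m")
    case True then show ?thesis using hm unfolding hol_map_def by metis
  next
    case False
    hence "j < Suc m" using that by simp
    hence "hol_map D (f j) \<and> a j \<in> ball 0 1 \<and> f j (a j) = x j" using Suc.prems by blast
    then show ?thesis unfolding hol_map_def by metis
  qed
  have hol1: "(\<lambda>z. fst (f m z)) holomorphic_on ball 0 1" and into: "\<And>z. z \<in> ball 0 1 \<Longrightarrow> fst (f m z) \<in> ball 0 1"
    using hm(1) proj unfolding hol_map_def by auto
  have "pd (fst (x m)) (fst (x (Suc m))) \<le> pd (a m) (b m)"
    using schwarz_pick[OF hol1 into hm(2,3)] hm by simp
  moreover have "fst (x m) \<in> ball 0 1" "fst (x (Suc m)) \<in> ball 0 1" using proj inD by auto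
  ultimately have step: "poincare_dist (fst (x m)) (fst (x (Suc m))) \<le> poincare_dist (a m) (b m)"
    unfolding poincare_dist_pd using pd_lt1 hm(2,3)
    by (intro artanh_mono) auto
  have "poincare_dist (fst (x 0)) (fst (x (Suc m))) \<le> poincare_dist (fst (x 0)) (fst (x m)) + poincare_dist (fst (x m)) (fst (x (Suc m)))"
    by (rule poincare_triangle) (use proj inD in auto)
  also have "\<dots> \<le> (\<Sum>j<m. poincare_dist (a j) (b j)) + poincare_dist (a m) (b m)"
    using Suc.IH[OF ch'] step by simp
  finally show ?case by simp
qed


lemma fst_deriv_one:
  assumes "\<And>z. z \<in> ball 0 1 \<Longrightarrow> g z = z" and "w \<in> ball 0 1"
  shows "deriv g w = 1"
proof -
  have "((\<lambda>z. z) has_field_derivative 1) (at w)" by (rule DERIV_ident)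
  hence "(g has_field_derivative 1) (at w)"
    by (rule has_field_derivative_transform_within_open[of _ _ _ "ball 0 1"]) (use assms in auto)
  thus ?thesis by (rule DERIV_imp_deriv)
qed

lemma kob_dist_single:
  assumes "hol_map D g" "a \<in> ball 0 1" "b \<in> ball 0 1"
  shows "poincare_dist a b \<in> {s. \<exists>(m::nat) (x::nat \<Rightarrow> complex \<times> complex) f a' b'.
      x 0 = g a \<and> x m = g b \<and>
      (\<forall>j<m. hol_map D (f j) \<and> a' j \<in> ball 0 1 \<and> b' j \<in> ball 0 1 \<and>
              f j (a' j) = x j \<and> f j (b' j) = x (Suc j)) \<and>
      s = (\<Sum>j<m. poincare_dist (a' j) (b' j))}"
  apply (rule CollectI)
  apply (rule exI[of _ "1::nat"])
  apply (rule exI[of _ "\<lambda>j. if j = 0 then g a else g b"])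
  apply (rule exI[of _ "\<lambda>j. g"])
  apply (rule exI[of _ "\<lambda>j. a"])
  apply (rule exI[of _ "\<lambda>j. b"])
  using assms by auto

theorem theorem2p3:
  fixes \<epsilon> c :: real and z0 :: complex and f :: "complex \<Rightarrow> complex \<times> complex"
  assumes "0 < \<epsilon>" "\<epsilon> < 1/100"
    and "z0 \<in> ball 0 1" "z0 \<noteq> 0"
    and "0 \<le> c" "c < 1 / (16 * (1 + \<epsilon>)^3)"
    and "inf_extremal (Omega \<epsilon>) (0, 0) (1, of_real c * z0) f"
  shows "complex_geodesic (Omega \<epsilon>) f \<and> inf_complex_geodesic (Omega \<epsilon>) f"
proof -
  define Om where "Om = Omega \<epsilon>"
  define a where "a = of_real c * z0"
  from assms(7) obtain lam where hf: "hol_map Om f" and f0: "f 0 = (0,0)" and lam: "lam > 0"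
    and dlam: "cderiv f 0 = lam *\<^sub>R (1, a)"
    and maxi: "\<And>g \<mu>. hol_map Om g \<Longrightarrow> g 0 = (0,0) \<Longrightarrow> \<mu> > 0 \<Longrightarrow> cderiv g 0 = \<mu> *\<^sub>R (1,a) \<Longrightarrow> \<mu> \<le> lam"
    unfolding inf_extremal_def a_def Om_def by blast
  have proj: "\<And>p. p \<in> Om \<Longrightarrow> fst p \<in> ball 0 1" using Omega_fst assms(1,2) unfolding Om_def by auto
  have e3: "1 \<le> (1+\<epsilon>)^3" using assms(1) by (simp add: one_le_power)
  have ca: "cmod a \<le> c" unfolding a_def using assms(3,5) by (simp add: norm_mult mult_left_le)
  have "1 / (16 * (1 + \<epsilon>)^3) \<le> 1/(16*1)" using e3 assms(1) by (intro divide_left_mono) auto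
  hence c1: "c < 1/16" using assms(6) by simp
  have cb: "2 * c < 1 / (4 * (1 + \<epsilon>)^3)"
  proof -
    have "2 * c < 2 * (1 / (16 * (1 + \<epsilon>)^3))" using assms(6) by simp
    also have "\<dots> \<le> 1 / (4 * (1 + \<epsilon>)^3)" using e3 assms(1) by (simp add: divide_simps)
    finally show ?thesis .
  qed
  define F0 where "F0 = (\<lambda>z::complex. (z, a*z + cnj a * z^3))"
  have hF0: "hol_map Om F0"
    unfolding hol_map_def
  proof (intro conjI ballI)
    show "(\<lambda>z. fst (F0 z)) holomorphic_on ball 0 1" unfolding F0_def by simp
    show "(\<lambda>z. snd (F0 z)) holomorphic_on ball 0 1" unfolding F0_def by (auto intro!: holomorphic_intros)
    fix z :: complex assume z: "z \<in> ball 0 1"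
    have r: "rho (F0 z) < 0" unfolding F0_def by (rule disc_rho) (use ca c1 z in auto)
    have "cmod (a*z + cnj a * z^3) \<le> cmod a * cmod z + cmod a * cmod z ^ 3"
      using norm_triangle_ineq[of "a*z" "cnj a * z^3"] by (simp add: norm_mult norm_power)
    also have "\<dots> \<le> cmod a * 1 + cmod a * 1"
      using z by (intro add_mono mult_left_mono) (auto simp: power_le_one)
    also have "\<dots> \<le> 2 * c" using ca by simp
    finally have "cmod (snd (F0 z)) < 1 / (4 * (1 + \<epsilon>)^3)" using cb unfolding F0_def by simp
    moreover have "cmod (fst (F0 z)) < 1 + \<epsilon>" using z assms(1) unfolding F0_def by simp
    ultimately show "F0 z \<in> Om" using r unfolding Om_def Omega_def
      by (cases "F0 z") auto
  qed
  have "deriv (\<lambda>w. a*w + cnj a * w^3) 0 = a"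
    by (rule DERIV_imp_deriv) (auto intro!: derivative_eq_intros)
  hence dF0: "cderiv F0 0 = 1 *\<^sub>R (1, a)" unfolding cderiv_def F0_def by simp
  have "1 \<le> lam" by (rule maxi[OF hF0 _ _ dF0]) (auto simp: F0_def)
  define g1 where "g1 = (\<lambda>z. fst (f z))"
  have hg1: "g1 holomorphic_on ball 0 1" using hf unfolding hol_map_def g1_def by auto
  have g1in: "\<And>z. z \<in> ball 0 1 \<Longrightarrow> g1 z \<in> ball 0 1" using hf proj unfolding hol_map_def g1_def by auto
  have g10: "g1 0 = 0" using f0 unfolding g1_def by simp
  have dg10: "deriv g1 0 = of_real lam" using dlam unfolding cderiv_def g1_def
    by (simp add: scaleR_conv_of_real)
  have nl: "norm (deriv g1 0) \<le> 1"
    using Schwarz_Lemma(2)[OF hg1 g10, where \<xi>="0::complex"] g1in by auto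
  hence "lam \<le> 1" using dg10 lam by simp
  hence lam1: "lam = 1" using \<open>1 \<le> lam\<close> by simp
  have "norm (deriv g1 0) = 1" using dg10 lam1 by simp
  then obtain \<alpha> where al: "\<And>z. norm z < 1 \<Longrightarrow> g1 z = \<alpha> * z"
    using Schwarz_Lemma(3)[OF hg1 g10, where \<xi>="0::complex"] g1in by auto
  have "((\<lambda>z. \<alpha> * z) has_field_derivative \<alpha>) (at 0)" by (auto intro!: derivative_eq_intros)
  hence "(g1 has_field_derivative \<alpha>) (at 0)"
    by (rule has_field_derivative_transform_within_open[of _ _ _ "ball 0 1"]) (use al in auto)
  hence "deriv g1 0 = \<alpha>" by (rule DERIV_imp_deriv)
  hence "\<alpha> = 1" using dg10 lam1 by simp
  hence fid: "\<And>z. z \<in> ball 0 1 \<Longrightarrow> fst (f z) = z" using al unfolding g1_def by auto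
  have fin: "\<And>z. z \<in> ball 0 1 \<Longrightarrow> f z \<in> Om" using hf unfolding hol_map_def by auto
  have geo: "complex_geodesic Om f"
    unfolding complex_geodesic_def
  proof (intro conjI ballI)
    show "hol_map Om f" by (rule hf)
    fix \<zeta> \<zeta>' :: complex assume z: "\<zeta> \<in> ball 0 1" and z': "\<zeta>' \<in> ball 0 1"
    show "kob_dist Om (f \<zeta>) (f \<zeta>') = poincare_dist \<zeta> \<zeta>'"
      unfolding kob_dist_def
    proof (rule cInf_eq_minimum[OF kob_dist_single[OF hf z z']])
      fix s assume "s \<in> {s. \<exists>(m::nat) (x::nat \<Rightarrow> complex \<times> complex) f' a b.
        x 0 = f \<zeta> \<and> x m = f \<zeta>' \<and>
        (\<forall>j<m. hol_map Om (f' j) \<and> a j \<in> ball 0 1 \<and> b j \<in> ball 0 1 \<and>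
              f' j (a j) = x j \<and> f' j (b j) = x (Suc j)) \<and>
        s = (\<Sum>j<m. poincare_dist (a j) (b j))}"
      then obtain m x f' a' b' where x0: "x 0 = f \<zeta>" and xm: "x m = f \<zeta>'"
        and ch: "\<forall>j<m. hol_map Om (f' j) \<and> a' j \<in> ball 0 1 \<and> b' j \<in> ball 0 1 \<and>
              f' j (a' j) = x j \<and> f' j (b' j) = x (Suc j)"
        and sv: "s = (\<Sum>j<m. poincare_dist (a' j) (b' j))" by blast
      have "poincare_dist (fst (x 0)) (fst (x m)) \<le> s"
        unfolding sv by (rule chain_bound[OF proj ch])
      thus "poincare_dist \<zeta> \<zeta>' \<le> s" using x0 xm fid z z' by simp
    qed
  qed
  have inf: "inf_complex_geodesic Om f"
    unfolding inf_complex_geodesic_def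
  proof (intro conjI ballI allI)
    show "hol_map Om f" by (rule hf)
    fix \<zeta> v0 :: complex assume z: "\<zeta> \<in> ball 0 1"
    define d2 where "d2 = deriv (\<lambda>w. snd (f w)) \<zeta>"
    have cd: "cderiv f \<zeta> = (1, d2)" unfolding cderiv_def d2_def
      using fst_deriv_one[of "\<lambda>w. fst (f w)" \<zeta>] fid z by simp
    define T where "T = {1 / r |r. r > 0 \<and> (\<exists>g. hol_map Om g \<and> g 0 = f \<zeta> \<and> cderiv g 0 = r *\<^sub>R (v0, v0 * d2))}"
    have kT: "kob_metric Om (f \<zeta>) (v0 * fst (cderiv f \<zeta>), v0 * snd (cderiv f \<zeta>)) = Inf T"
      unfolding kob_metric_def T_def cd by simp
    have nz: "cmod \<zeta> < 1" using z by simp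
    have Dpos: "1 - (cmod \<zeta>)^2 > 0" using nz by (simp add: power_less_one_iff abs_square_less_1)
    have lower: "r * cmod v0 \<le> 1 - (cmod \<zeta>)^2"
      if "r > 0" "hol_map Om g" "g 0 = f \<zeta>" "cderiv g 0 = r *\<^sub>R (v0, v0*d2)" for r g
    proof -
      have h: "(\<lambda>z. fst (g z)) holomorphic_on ball 0 1"
        and into: "\<And>z. z \<in> ball 0 1 \<Longrightarrow> fst (g z) \<in> ball 0 1"
        using that(2) proj unfolding hol_map_def by auto
      have "fst (g 0) = \<zeta>" using that(3) fid z by simp
      from schwarz_pick_deriv[OF h into this]
      have "cmod (deriv (\<lambda>z. fst (g z)) 0) \<le> 1 - (cmod \<zeta>)^2" .
      moreover have "deriv (\<lambda>z. fst (g z)) 0 = of_real r * v0"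
        using that(4) unfolding cderiv_def by (simp add: scaleR_conv_of_real)
      ultimately show ?thesis using that(1) by (simp add: norm_mult)
    qed
    have "Inf T = poincare_metric \<zeta> v0"
    proof (cases "v0 = 0")
      case True
      have memb: "1/r \<in> T" if "r > 0" for r
      proof -
        have "hol_map Om (\<lambda>_. f \<zeta>)" unfolding hol_map_def using fin z by auto
        moreover have "cderiv (\<lambda>_. f \<zeta>) 0 = r *\<^sub>R (v0, v0 * d2)" unfolding cderiv_def True by simp
        ultimately show ?thesis unfolding T_def using that by blast
      qed
      have "Inf T = 0"
      proof (rule cInf_eq_non_empty)
        show "T \<noteq> {}" using memb[of 1] by auto
        show "\<And>x. x \<in> T \<Longrightarrow> 0 \<le> x" unfolding T_def by auto
        fix y assume yl: "\<And>x. x \<in> T \<Longrightarrow> y \<le> x"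
        show "y \<le> 0"
        proof (rule ccontr)
          assume "\<not> y \<le> 0"
          hence yp: "y > 0" by simp
          have "1 / (2 / y) \<in> T" using memb[of "2/y"] yp by simp
          hence "y \<le> 1 / (2 / y)" by (rule yl)
          thus False using yp by simp
        qed
      qed
      thus ?thesis using True by (simp add: poincare_metric_def)
    next
      case False
      have nv: "cmod v0 > 0" using False by simp
      define u where "u = v0 / of_real (cmod v0)"
      define r0 where "r0 = (1 - (cmod \<zeta>)^2) / cmod v0"
      define \<phi> where "\<phi> = (\<lambda>\<eta>. (u*\<eta> + \<zeta>) / (1 + cnj \<zeta> * (u*\<eta>)))"
      have cu: "cmod u = 1" unfolding u_def using nv by (simp add: norm_divide)
      have phiM: "\<phi> \<eta> = Moebius_function 0 (-\<zeta>) (u*\<eta>)" for \<eta>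
        by (simp add: \<phi>_def Moebius_function_def)
      have nmz: "cmod (-\<zeta>) < 1" using nz by simp
      have uball: "u * \<eta> \<in> ball 0 1" if "\<eta> \<in> ball 0 1" for \<eta>
        using that cu by (simp add: norm_mult)
      have phiball: "\<phi> \<eta> \<in> ball 0 1" if "\<eta> \<in> ball 0 1" for \<eta>
        unfolding phiM using mob_maps[OF nmz uball[OF that]] .
      have "(Moebius_function 0 (-\<zeta>) \<circ> (\<lambda>\<eta>. u*\<eta>)) holomorphic_on ball 0 1"
        by (rule holomorphic_on_compose_gen[OF _ Moebius_function_holomorphic[OF nmz]])
           (use uball in \<open>auto intro!: holomorphic_intros\<close>)
      hence phihol: "\<phi> holomorphic_on ball 0 1"
        by (simp add: phiM[abs_def] o_def)
      have phi0: "\<phi> 0 = \<zeta>" by (simp add: \<phi>_def)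
      define D where "D = 1 - \<zeta> * cnj \<zeta>"
      have Dr: "D = of_real (1 - (cmod \<zeta>)^2)" unfolding D_def
        by (simp only: of_real_diff of_real_1 complex_norm_square)
      have dphi: "(\<phi> has_field_derivative u * D) (at 0)" unfolding \<phi>_def D_def
        by (auto intro!: derivative_eq_intros simp: algebra_simps)
      have dcomp: "deriv (\<lambda>\<eta>. h (\<phi> \<eta>)) 0 = deriv h \<zeta> * (u * D)"
        if hh: "h holomorphic_on ball 0 1" for h
      proof -
        have "(h has_field_derivative deriv h \<zeta>) (at \<zeta>)"
          by (rule holomorphic_derivI[OF hh]) (use z in auto)
        hence "(h has_field_derivative deriv h \<zeta>) (at (\<phi> 0))" by (simp add: phi0)
        from DERIV_chain[OF this dphi]
        have "((\<lambda>\<eta>. h (\<phi> \<eta>)) has_field_derivative deriv h \<zeta> * (u * D)) (at 0)" by (simp add: o_def)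
        thus ?thesis by (rule DERIV_imp_deriv)
      qed
      define g where "g = (\<lambda>\<eta>. f (\<phi> \<eta>))"
      have h1: "(\<lambda>w. fst (f w)) holomorphic_on ball 0 1" and h2: "(\<lambda>w. snd (f w)) holomorphic_on ball 0 1"
        using hf unfolding hol_map_def by auto
      have hg: "hol_map Om g" unfolding hol_map_def g_def
      proof (intro conjI ballI)
        show "(\<lambda>z. fst (f (\<phi> z))) holomorphic_on ball 0 1"
          using holomorphic_on_compose_gen[OF phihol h1] phiball by (auto simp: o_def image_subset_iff)
        show "(\<lambda>z. snd (f (\<phi> z))) holomorphic_on ball 0 1"
          using holomorphic_on_compose_gen[OF phihol h2] phiball by (auto simp: o_def image_subset_iff)
        fix z :: complex assume "z \<in> ball 0 1"
        thus "f (\<phi> z) \<in> Om" using fin phiball by auto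
      qed
      have g0: "g 0 = f \<zeta>" unfolding g_def phi0 ..
      have key: "of_real r0 * v0 = u * D" unfolding r0_def u_def Dr using nv
        by (simp add: field_simps)
      have "cderiv g 0 = (deriv (\<lambda>w. fst (f w)) \<zeta> * (u * D), d2 * (u * D))"
        unfolding cderiv_def g_def d2_def using dcomp[OF h1] dcomp[OF h2] by simp
      also have "\<dots> = r0 *\<^sub>R (v0, v0 * d2)"
        using fst_deriv_one[of "\<lambda>w. fst (f w)" \<zeta>] fid z key
        by (simp add: scaleR_conv_of_real mult_ac)
      finally have cg: "cderiv g 0 = r0 *\<^sub>R (v0, v0 * d2)" .
      have r0p: "r0 > 0" unfolding r0_def using Dpos nv by simp
      have "Inf T = 1 / r0"
      proof (rule cInf_eq_minimum)
        show "1 / r0 \<in> T" unfolding T_def using r0p hg g0 cg by blast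
        fix x assume "x \<in> T"
        then obtain r g' where x: "x = 1 / r" and rp: "r > 0" and "hol_map Om g'" "g' 0 = f \<zeta>"
          "cderiv g' 0 = r *\<^sub>R (v0, v0 * d2)" unfolding T_def by blast
        hence le: "r * cmod v0 \<le> 1 - (cmod \<zeta>)^2" using lower by blast
        show "1 / r0 \<le> x" unfolding x r0_def using le rp Dpos nv
          by (simp add: divide_simps mult.commute)
      qed
      thus ?thesis unfolding r0_def poincare_metric_def by simp
    qed
    thus "kob_metric Om (f \<zeta>) (v0 * fst (cderiv f \<zeta>), v0 * snd (cderiv f \<zeta>)) = poincare_metric \<zeta> v0"
      using kT by simp
  qed
  show ?thesis using geo inf unfolding Om_def by simp
qed

end
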